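(* Let $n \ge 1$ be an integer and let $t$ be an integer with $0 < t < \frac{n+1}{2}$. Let $\mathcal{I}$ be the input complex, $\mathcal{O}'$ the colorless output complex and $\Xi$ the colorless carrier map of the colorless cross-blockchain transaction (CBT) task on $n+1$ blockchains, as defined in the context. Then there is no continuous map $f : |\mathrm{skel}^t \mathcal{I}| \to |\mathcal{O}'|$ carried by $\Xi$, i.e. there is no continuous $f$ with $f(|\sigma|) \subseteq |\Xi(\sigma)|$ for every simplex $\sigma$ of $\mathrm{skel}^t \mathcal{I}$.
   Context: Setting. There are $n+1$ distinct blockchains $C_0,\dots,C_n$. An $(n+1)$-party cross-blockchain transaction (CBT) touches exactly one block $v_i$ on each blockchain $C_i$, $0 \le i \le n$. Input complex $\mathcal{I}$. The vertices of $\mathcal{I}$ are the $3(n+1)$ pairs $(v_i, a)$ with $0 \le i \le n$ and $a \in \{0,1,\bot\}$. Here $a=0$ means the local transaction on $C_i$ is not committed, $a=1$ means it is committed, and $a=\bot$ means the branch containing the block has been suspended by a fork. A nonempty set of vertices is a simplex of $\mathcal{I}$ if and only if its vertices involve pairwise distinct blocks. Thus $\mathcal{I}$ is pure of dimension $n$. Colorless output complex $\mathcal{O}'$. Its vertices are the two values $0$ (aborted) and $1$ (committed), and its only simplices are the two $0$-simplices $\{0\}$ and $\{1\}$. Colorless carrier map $\Xi$. For a simplex $\sigma$ of $\mathcal{I}$, $\Xi(\sigma)$ is the following subcomplex of $\mathcal{O}'$: - $\Xi(\sigma) = \{1\}$ if every input value in $\sigma$ is $1$; - $\Xi(\sigma)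 = \{0\}$ if some input value in $\sigma$ is $\bot$; - $\Xi(\sigma) = \mathcal{O}'$ (the two points $0$ and $1$) otherwise. Notation. $\mathrm{skel}^t \mathcal{I}$ is the $t$-skeleton of $\mathcal{I}$, the subcomplex of simplices of dimension at most $t$. $|\cdot|$ denotes geometric realization. *)

theory Defs
  imports "HOL-Analysis.Analysis"
begin

(* Geometric realization via barycentric coordinates: points are functions
   'v \<Rightarrow> real, with the product topology (Function_Topology). *)

definition simplex_real :: "'v set \<Rightarrow> ('v \<Rightarrow> real) set" where
  "simplex_real \<sigma> = {x. (\<forall>v. 0 \<le> x v) \<and> (\<forall>v. v \<notin> \<sigma> \<longrightarrow> x v = 0) \<and> sum x \<sigma> = 1}"

definition realization :: "'v set set \<Rightarrow> ('v \<Rightarrow> real) set" where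
  "realization K = \<Union> (simplex_real ` K)"

definition skel :: "nat \<Rightarrow> 'v set set \<Rightarrow> 'v set set" where
  "skel t K = {\<sigma> \<in> K. card \<sigma> \<le> t + 1}"

(* input values: 0 (not committed), 1 (committed), \<bottom> (suspended by fork) *)
datatype inval = In0 | In1 | InBot

(* output values: 0 (aborted), 1 (committed) *)
datatype outval = Out0 | Out1

(* block v_i on blockchain C_i is identified with its index i *)
definition CBT_input :: "nat \<Rightarrow> (nat \<times> inval) set set" where
  "CBT_input n = {\<sigma>. \<sigma> \<noteq> {} \<and> finite \<sigma> \<and> (\<forall>x\<in>\<sigma>. fst x \<le> n) \<and> inj_on fst \<sigma>}"

definition CBT_output :: "outval set set" where
  "CBT_output = {{Out0}, {Out1}}"

definition CBT_carrier :: "(nat \<times> inval) set \<Rightarrow> outval set set" where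
  "CBT_carrier \<sigma> =
     (if (\<forall>x\<in>\<sigma>. snd x = In1) then {{Out1}}
      else if (\<exists>x\<in>\<sigma>. snd x = InBot) then {{Out0}}
      else CBT_output)"

end

theory Submission
  imports Defs
begin

theorem lemma1:
  fixes n t :: nat
  assumes "n \<ge> 1" and "0 < t" and "2 * t < n + 1"
  shows "\<not> (\<exists>f. continuous_map (top_of_set (realization (skel t (CBT_input n))))
                                (top_of_set (realization CBT_output)) f
              \<and> (\<forall>\<sigma>\<in>skel t (CBT_input n).
                    f ` simplex_real \<sigma> \<subseteq> realization (CBT_carrier \<sigma>)))"
proof
  assume "\<exists>f. continuous_map (top_of_set (realization (skel t (CBT_input n))))
                                (top_of_set (realization CBT_output)) f
              \<and> (\<forall>\<sigma>\<in>skel t (CBT_input n).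
                    f ` simplex_real \<sigma> \<subseteq> realization (CBT_carrier \<sigma>))"
  then obtain f where H: "\<forall>\<sigma>\<in>skel t (CBT_input n).
                    f ` simplex_real \<sigma> \<subseteq> realization (CBT_carrier \<sigma>)" by blast
  define a where "a = ((0::nat), In1)"
  define b where "b = ((1::nat), InBot)"
  define p where "p = (\<lambda>v. if v = a then (1::real) else 0)"
  have ab: "a \<noteq> b" by (simp add: a_def b_def)
  have s1: "{a} \<in> skel t (CBT_input n)"
    using assms by (simp add: skel_def CBT_input_def a_def)
  have s2: "{a, b} \<in> skel t (CBT_input n)"
    using assms by (simp add: skel_def CBT_input_def a_def b_def)
  have p1: "p \<in> simplex_real {a}" by (simp add: simplex_real_def p_def)
  have p2: "p \<in> simplex_real {a, b}" using ab by (simp add: simplex_real_def p_def)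
  have c1: "CBT_carrier {a} = {{Out1}}" by (simp add: CBT_carrier_def a_def)
  have c2: "CBT_carrier {a, b} = {{Out0}}" by (simp add: CBT_carrier_def a_def b_def)
  have "f p \<in> simplex_real {Out1}"
  proof -
    have "f ` simplex_real {a} \<subseteq> realization (CBT_carrier {a})" using H s1 by blast
    thus ?thesis using p1 c1 by (auto simp: realization_def)
  qed
  hence "f p Out1 = 1" by (simp add: simplex_real_def)
  moreover have "f p \<in> simplex_real {Out0}"
  proof -
    have "f ` simplex_real {a, b} \<subseteq> realization (CBT_carrier {a, b})" using H s2 by blast
    thus ?thesis using p2 c2 by (auto simp: realization_def)
  qed
  hence "f p Out1 = 0" by (simp add: simplex_real_def)
  ultimately show False by simp
qed

end
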